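(* For every integer $d\ge0$, the Legendre basis matrix $B^{(d)}$ is $(d+1)$-banded: $b^{(d)}_{k,\ell}=0$ whenever $|k-\ell|>d+1$.
   Context: Let $\{p_k\}_{k\ge0}$ be the orthonormal Legendre polynomials on $[-1,1]$: $p_k$ has exact degree $k$, positive leading coefficient, and $\int_{-1}^1 p_k(t)p_\ell(t)\,dt=\delta_{k\ell}$. Let $\Theta$ be the Heaviside function, $\Theta(x)=0$ for $x<0$ and $\Theta(x)=1$ for $x\ge0$. The Legendre basis matrix of degree $d$ is the infinite matrix $B^{(d)}=[b^{(d)}_{k,\ell}]_{k,\ell\ge0}$ with $b^{(d)}_{k,\ell}=\int_{-1}^1\int_{-1}^1 p_d(\tau)\Theta(\tau-\rho)p_k(\tau)p_\ell(\rho)\,d\rho\,d\tau$, i.e. the coefficient matrix of $p_d(t)\Theta(t-s)$. *)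

theory Defs
  imports "HOL-Analysis.Analysis" "HOL-Computational_Algebra.Polynomial"
begin

definition heaviside :: "real \<Rightarrow> real" where
  "heaviside x = (if x < 0 then 0 else 1)"

definition orthonormal_legendre :: "(nat \<Rightarrow> real poly) \<Rightarrow> bool" where
  "orthonormal_legendre p \<longleftrightarrow>
     (\<forall>k. degree (p k) = k \<and> lead_coeff (p k) > 0) \<and>
     (\<forall>k l. integral {-1..1} (\<lambda>t. poly (p k) t * poly (p l) t) = (if k = l then 1 else 0))"

definition legendre_basis_entry :: "(nat \<Rightarrow> real poly) \<Rightarrow> nat \<Rightarrow> nat \<Rightarrow> nat \<Rightarrow> real" where
  "legendre_basis_entry p d k l =
     integral {-1..1} (\<lambda>\<tau>. integral {-1..1} (\<lambda>\<rho>.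
        poly (p d) \<tau> * heaviside (\<tau> - \<rho>) * poly (p k) \<tau> * poly (p l) \<rho>))"

end

theory Submission
  imports Defs
begin

lemma poly_integrable: "(\<lambda>x. poly q x) integrable_on {a..b::real}"
  by (intro integrable_continuous_interval continuous_intros)

lemma antideriv_ex: "\<exists>A. pderiv A = (q :: real poly)"
proof -
  let ?A = "\<Sum>i\<le>degree q. monom (coeff q i / real (Suc i)) (Suc i)"
  have "pderiv ?A = (\<Sum>i\<le>degree q. pderiv (monom (coeff q i / real (Suc i)) (Suc i)))"
    using higher_pderiv_sum[of 1] by simp
  also have "\<dots> = (\<Sum>i\<le>degree q. monom (coeff q i) i)"
    by (intro sum.cong refl) (simp add: pderiv_monom del: of_nat_Suc)
  also have "\<dots> = q" by (rule poly_as_sum_of_monoms)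
  finally show ?thesis by blast
qed

lemma ftc_poly:
  assumes "a \<le> (b::real)"
  shows "integral {a..b} (\<lambda>x. poly (pderiv F) x) = poly F b - poly F a"
proof -
  have "((\<lambda>x. poly (pderiv F) x) has_integral (poly F b - poly F a)) {a..b}"
    apply (rule fundamental_theorem_of_calculus[OF assms])
    using poly_DERIV[of F] has_field_derivative_at_within
    by (metis has_real_derivative_iff_has_vector_derivative)
  thus ?thesis by (rule integral_unique)
qed

lemma orth:
  assumes L: "orthonormal_legendre p" and dq: "degree q < k"
  shows "integral {-1..1} (\<lambda>t. poly (p k * q) t) = 0"
proof -
  have deg: "\<And>k. degree (p k) = k" and lc: "\<And>k. lead_coeff (p k) > 0"
    and on: "\<And>k l. integral {-1..1} (\<lambda>t. poly (p k) t * poly (p l) t) = (if k = l then 1 else 0)"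
    using L unfolding orthonormal_legendre_def by metis+
  have "\<forall>q. (\<forall>i\<ge>n. coeff q i = 0) \<longrightarrow> n \<le> k \<longrightarrow> integral {-1..1} (\<lambda>t. poly (p k * q) t) = 0" for n
  proof (induction n)
    case 0
    show ?case
    proof (intro allI impI)
      fix q :: "real poly" assume "\<forall>i\<ge>0. coeff q i = 0"
      then have "q = 0" by (simp add: poly_eq_iff)
      then show "integral {-1..1} (\<lambda>t. poly (p k * q) t) = 0" by simp
    qed
  next
    case (Suc n)
    show ?case
    proof (intro allI impI)
      fix q :: "real poly" assume hq: "\<forall>i\<ge>Suc n. coeff q i = 0" and nk: "Suc n \<le> k"
      define c where "c = coeff q n / lead_coeff (p n)"
      define r where "r = q - smult c (p n)"
      have lcn: "lead_coeff (p n) \<noteq> 0" using lc[of n] by auto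
      have "\<forall>i\<ge>n. coeff r i = 0"
      proof (intro allI impI)
        fix i assume "n \<le> i"
        show "coeff r i = 0"
        proof (cases "i = n")
          case True
          then show ?thesis using lcn deg[of n] by (simp add: r_def c_def)
        next
          case False
          then have "i > degree (p n)" using \<open>n \<le> i\<close> deg[of n] by simp
          then have "coeff (p n) i = 0" by (rule coeff_eq_0)
          then show ?thesis using hq False \<open>n \<le> i\<close> by (simp add: r_def)
        qed
      qed
      then have r0: "integral {-1..1} (\<lambda>t. poly (p k * r) t) = 0" using Suc.IH nk by simp
      have qr: "q = r + smult c (p n)" by (simp add: r_def)
      have "integral {-1..1} (\<lambda>t. poly (p k * q) t)
          = integral {-1..1} (\<lambda>t. poly (p k * r) t + c * (poly (p k) t * poly (p n) t))"
        by (simp add: qr algebra_simps)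
      also have "\<dots> = integral {-1..1} (\<lambda>t. poly (p k * r) t) + c * integral {-1..1} (\<lambda>t. poly (p k) t * poly (p n) t)"
        apply (subst integral_add)
        apply (rule integrable_continuous_interval, intro continuous_intros)+
        apply simp
        done
      also have "\<dots> = 0" using r0 on[of k n] nk by simp
      finally show "integral {-1..1} (\<lambda>t. poly (p k * q) t) = 0" .
    qed
  qed
  then show ?thesis using dq coeff_eq_0[of q] by (metis le_eq_less_or_eq less_le_trans)
qed

theorem corollary3p4:
  fixes p :: "nat \<Rightarrow> real poly" and d k l :: nat
  assumes "orthonormal_legendre p"
    and "\<bar>int k - int l\<bar> > int d + 1"
  shows "legendre_basis_entry p d k l = 0"
proof -
  note L = assms(1)
  have deg: "\<And>k. degree (p k) = k"
    using L unfolding orthonormal_legendre_def by metis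
  obtain A where A: "pderiv A = p l" using antideriv_ex by blast
  define a where "a = poly A (-1)"
  have inner: "integral {-1..1} (\<lambda>\<rho>. poly (p d) \<tau> * heaviside (\<tau> - \<rho>) * poly (p k) \<tau> * poly (p l) \<rho>)
      = poly (p d * p k * (A - [:a:])) \<tau>" if "\<tau> \<in> {-1..1}" for \<tau>
  proof -
    have "(\<lambda>\<rho>. poly (p d) \<tau> * heaviside (\<tau> - \<rho>) * poly (p k) \<tau> * poly (p l) \<rho>)
        = (\<lambda>\<rho>. (poly (p d) \<tau> * poly (p k) \<tau>) * (if \<rho> \<in> {..\<tau>} then poly (p l) \<rho> else 0))"
      by (auto simp: heaviside_def)
    then have "integral {-1..1} (\<lambda>\<rho>. poly (p d) \<tau> * heaviside (\<tau> - \<rho>) * poly (p k) \<tau> * poly (p l) \<rho>)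
        = (poly (p d) \<tau> * poly (p k) \<tau>) * integral ({..\<tau>} \<inter> {-1..1}) (\<lambda>\<rho>. poly (p l) \<rho>)"
      by (simp only: integral_mult_right integral_restrict_Int)
    also have "{..\<tau>} \<inter> {-1..1} = {-1..\<tau>}" using that by auto
    also have "integral {-1..\<tau>} (\<lambda>\<rho>. poly (p l) \<rho>) = poly A \<tau> - a"
      using ftc_poly[of "-1" \<tau> A] that by (simp add: A a_def)
    finally show ?thesis by simp
  qed
  have E: "legendre_basis_entry p d k l = integral {-1..1} (\<lambda>\<tau>. poly (p d * p k * (A - [:a:])) \<tau>)"
    unfolding legendre_basis_entry_def by (rule integral_cong) (rule inner)
  have degA: "degree A \<le> l + 1" using degree_pderiv[of A] A deg[of l] by simp
  show ?thesis
  proof (cases "k > l + d + 1")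
    case True
    have "degree (p d * (A - [:a:])) \<le> d + (l + 1)"
      using degree_mult_le[of "p d" "A - [:a:]"] degree_diff_le[of A "l+1" "[:a:]"] degA deg[of d]
      by simp
    then have "degree (p d * (A - [:a:])) < k" using True by simp
    moreover have "p d * p k * (A - [:a:]) = p k * (p d * (A - [:a:]))" by (simp add: ac_simps)
    ultimately show ?thesis unfolding E using orth[OF L] by presburger
  next
    case False
    then have lk: "l > k + d + 1" using assms(2) by auto
    obtain B where B: "pderiv B = p d * p k" using antideriv_ex by blast
    have degB: "degree B < l"
      using degree_pderiv[of B] B degree_mult_le[of "p d" "p k"] deg[of d] deg[of k] lk by simp
    define F where "F = B * (A - [:a:])"
    have pF: "pderiv F = p d * p k * (A - [:a:]) + p l * B"
      by (simp add: F_def pderiv_mult pderiv_diff pderiv_smult A B algebra_simps)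
    have i1: "integral {-1..1} (\<lambda>t. poly (p l * B) t) = 0" by (rule orth[OF L degB])
    have "integral {-1..1} (\<lambda>t. poly (p l * 1) t) = 0" by (rule orth[OF L]) (use lk in simp)
    then have "poly A 1 - a = 0" using ftc_poly[of "-1" 1 A] by (simp add: A a_def)
    then have "integral {-1..1} (\<lambda>t. poly (pderiv F) t) = 0"
      using ftc_poly[of "-1" 1 F] by (simp add: F_def a_def)
    also have "integral {-1..1} (\<lambda>t. poly (pderiv F) t)
        = integral {-1..1} (\<lambda>t. poly (p d * p k * (A - [:a:])) t) + integral {-1..1} (\<lambda>t. poly (p l * B) t)"
      unfolding pF poly_add
      by (rule integral_add; rule poly_integrable)
    finally show ?thesis unfolding E using i1 by linarith
  qed
qed

end
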